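(* Let $G$ be a finite digraph which is a directed cycle, let $\varphi^L,\varphi^U:G\to[0,1]$ with $\varphi^L<\varphi^U$, and let $\varepsilon>0$. Then there exist a digraph $\tilde G$ which is a directed cycle, a surjective edge-preserving homomorphism $\Psi:\tilde G\to G$, and $\tilde\varphi^L,\tilde\varphi^U:\tilde G\to[0,1]$ such that: (a) if $\tilde g\in\tilde G$ and $\Psi(\tilde g)=g$, then $\varphi^L(g)\le\tilde\varphi^L(\tilde g)<\tilde\varphi^U(\tilde g)\le\varphi^U(g)$; (b) for every $g\in G$ there is $\tilde g\in\tilde G$ with $\Psi(\tilde g)=g$, $\tilde\varphi^L(\tilde g)=\varphi^L(g)$ and $\tilde\varphi^U(\tilde g)=\varphi^U(g)$; (c) for every $g\in G$ and all $a<b$ with $\varphi^L(g)\le a<b\le\varphi^U(g)$ there is $\tilde g\in\tilde G$ with $\Psi(\tilde g)=g$, $|a-\tilde\varphi^L(\tilde g)|<\varepsilon$ and $|b-\tilde\varphi^U(\tilde g)|<\varepsilon$; (d) whenever $\overrightarrow{\tilde g_1\tilde g_2}$ is an edge of $\tilde G$ with $\Psi(\tilde g_i)=g_i$, the increasing affine map $\alpha_1$ of $[\varphi^L(g_1),\varphi^U(g_1)]$ onto $[\varphi^L(g_2),\varphi^U(g_2)]$ and the increasing affine map $\alpha_2$ of $[\tilde\varphi^L(\tilde g_1),\tilde\varphi^U(\tilde g_1)]$ onto $[\tilde\varphi^L(\tilde g_2),\tilde\varphi^U(\tilde g_2)]$ are $\varepsilon$-close on their common domain, and $\alpha_1^{-1}$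 and $\alpha_2^{-1}$ are $\varepsilon$-close on their common domain. Moreover, there exists $m_0\in\mathbb{N}$ such that for every $m\ge m_0$ the digraph $\tilde G$ can be chosen with $|\tilde G|=m|G|$.
   Context: A digraph is a directed cycle if its vertices can be enumerated $c_1,\dots,c_k$ so that its edges are exactly $\overrightarrow{c_ic_{i+1}}$ ($1\le i<k$) and $\overrightarrow{c_kc_1}$. An edge-preserving homomorphism maps each edge $\overrightarrow{uv}$ to an edge $\overrightarrow{\Psi(u)\Psi(v)}$. *)

theory Defs
  imports Complex_Main
begin

definition is_directed_cycle :: "'a set \<Rightarrow> ('a \<times> 'a) set \<Rightarrow> bool" where
  "is_directed_cycle V E \<longleftrightarrow>
     (\<exists>(c :: nat \<Rightarrow> 'a) (k::nat). k \<ge> 1 \<and> bij_betw c {0..<k} V \<and>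
            E = {(c i, c ((i + 1) mod k)) | i. i < k})"

definition edge_hom :: "'b set \<Rightarrow> ('b \<times> 'b) set \<Rightarrow> 'a set \<Rightarrow> ('a \<times> 'a) set \<Rightarrow> ('b \<Rightarrow> 'a) \<Rightarrow> bool" where
  "edge_hom V1 E1 V2 E2 \<Psi> \<longleftrightarrow>
     (\<forall>v\<in>V1. \<Psi> v \<in> V2) \<and> (\<forall>(u,v)\<in>E1. (\<Psi> u, \<Psi> v) \<in> E2)"

definition aff_map :: "real \<Rightarrow> real \<Rightarrow> real \<Rightarrow> real \<Rightarrow> real \<Rightarrow> real" where
  "aff_map l1 u1 l2 u2 x = l2 + (x - l1) * (u2 - l2) / (u1 - l1)"

definition eps_close_on :: "real \<Rightarrow> real set \<Rightarrow> (real \<Rightarrow> real) \<Rightarrow> (real \<Rightarrow> real) \<Rightarrow> bool" where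
  "eps_close_on \<epsilon> D f g \<longleftrightarrow> (\<forall>x\<in>D. \<bar>f x - g x\<bar> < \<epsilon>)"

definition lemma8p2_props ::
  "'a set \<Rightarrow> ('a \<times> 'a) set \<Rightarrow> ('a \<Rightarrow> real) \<Rightarrow> ('a \<Rightarrow> real) \<Rightarrow> real \<Rightarrow>
   'b set \<Rightarrow> ('b \<times> 'b) set \<Rightarrow> ('b \<Rightarrow> 'a) \<Rightarrow> ('b \<Rightarrow> real) \<Rightarrow> ('b \<Rightarrow> real) \<Rightarrow> bool" where
  "lemma8p2_props V E L U \<epsilon> Vt Et \<Psi> Lt Ut \<longleftrightarrow>
     is_directed_cycle Vt Et \<and>
     edge_hom Vt Et V E \<Psi> \<and> \<Psi> ` Vt = V \<and>
     (\<forall>t\<in>Vt. Lt t \<in> {0..1} \<and> Ut t \<in> {0..1}) \<and>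
     \<comment> \<open>(a)\<close>
     (\<forall>t\<in>Vt. L (\<Psi> t) \<le> Lt t \<and> Lt t < Ut t \<and> Ut t \<le> U (\<Psi> t)) \<and>
     \<comment> \<open>(b)\<close>
     (\<forall>g\<in>V. \<exists>t\<in>Vt. \<Psi> t = g \<and> Lt t = L g \<and> Ut t = U g) \<and>
     \<comment> \<open>(c)\<close>
     (\<forall>g\<in>V. \<forall>a b. L g \<le> a \<and> a < b \<and> b \<le> U g \<longrightarrow>
        (\<exists>t\<in>Vt. \<Psi> t = g \<and> \<bar>a - Lt t\<bar> < \<epsilon> \<and> \<bar>b - Ut t\<bar> < \<epsilon>)) \<and>
     \<comment> \<open>(d)\<close>
     (\<forall>(t1,t2)\<in>Et.
        let g1 = \<Psi> t1; g2 = \<Psi> t2 in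
        eps_close_on \<epsilon> ({L g1..U g1} \<inter> {Lt t1..Ut t1})
          (aff_map (L g1) (U g1) (L g2) (U g2))
          (aff_map (Lt t1) (Ut t1) (Lt t2) (Ut t2)) \<and>
        eps_close_on \<epsilon> ({L g2..U g2} \<inter> {Lt t2..Ut t2})
          (aff_map (L g2) (U g2) (L g1) (U g1))
          (aff_map (Lt t2) (Ut t2) (Lt t1) (Ut t1)))"

end

theory Submission
  imports Defs
begin

lemma dlem:
  fixes L1 U1 L2 U2 p1 q1 p2 q2 h e :: real
  assumes "L1<U1" "L2<U2" "U2 - L2 \<le> 1" "p1<q1"
    "\<bar>p2-p1\<bar> \<le> h" "\<bar>q2-q1\<bar> \<le> h" "h<e"
  shows "eps_close_on e ({L1..U1} \<inter> {L1 + p1*(U1-L1) .. L1 + q1*(U1-L1)})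
     (aff_map L1 U1 L2 U2)
     (aff_map (L1 + p1*(U1-L1)) (L1 + q1*(U1-L1)) (L2 + p2*(U2-L2)) (L2+q2*(U2-L2)))"
  unfolding eps_close_on_def
proof
  fix x assume x: "x \<in> {L1..U1} \<inter> {L1 + p1*(U1-L1) .. L1 + q1*(U1-L1)}"
  define W1 where "W1 = U1 - L1"
  define W2 where "W2 = U2 - L2"
  define s where "s = (x-L1)/W1"
  define l where "l = (s-p1)/(q1-p1)"
  have W1: "W1 > 0" "W2 > 0" "W2 \<le> 1" using assms by (auto simp: W1_def W2_def)
  have xs: "x = L1 + s*W1" using W1 by (simp add: s_def)
  have sb: "p1 \<le> s" "s \<le> q1" using x W1 unfolding xs W1_def by auto
  have l01: "0 \<le> l" "l \<le> 1" using sb assms(4) by (auto simp: l_def divide_simps)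
  have sl: "s = p1 + l*(q1-p1)" using assms(4) by (simp add: l_def)
  have a1: "aff_map L1 U1 L2 U2 x = L2 + s*W2"
    unfolding aff_map_def xs W1_def[symmetric] W2_def[symmetric] using W1 by simp
  have a2: "aff_map (L1 + p1*(U1-L1)) (L1 + q1*(U1-L1)) (L2 + p2*(U2-L2)) (L2+q2*(U2-L2)) x
      = L2 + W2*(p2 + l*(q2-p2))"
    unfolding aff_map_def xs W1_def[symmetric] W2_def[symmetric] sl using W1 assms(4)
    by (simp add: field_simps)
  have d: "aff_map L1 U1 L2 U2 x - aff_map (L1 + p1*(U1-L1)) (L1 + q1*(U1-L1)) (L2 + p2*(U2-L2)) (L2+q2*(U2-L2)) x
     = - W2*((1-l)*(p2-p1) + l*(q2-q1))"
    unfolding a1 a2 sl by (simp add: algebra_simps)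
  have "\<bar>(1-l)*(p2-p1) + l*(q2-q1)\<bar> \<le> (1-l)*h + l*h"
  proof -
    have "\<bar>(1-l)*(p2-p1)\<bar> \<le> (1-l)*h" using l01 assms(5) by (simp add: abs_mult mult_left_mono)
    moreover have "\<bar>l*(q2-q1)\<bar> \<le> l*h" using l01 assms(6) by (simp add: abs_mult mult_left_mono)
    ultimately show ?thesis by (smt (verit))
  qed
  hence c: "\<bar>(1-l)*(p2-p1) + l*(q2-q1)\<bar> \<le> h" by (simp add: algebra_simps)
  have "\<bar>W2*((1-l)*(p2-p1) + l*(q2-q1))\<bar> \<le> h"
    using c W1 by (simp add: abs_mult) (smt (verit) mult_left_le_one_le abs_ge_zero)
  then show "\<bar>aff_map L1 U1 L2 U2 x - aff_map (L1 + p1*(U1-L1)) (L1 + q1*(U1-L1)) (L2 + p2*(U2-L2)) (L2+q2*(U2-L2)) x\<bar> < e"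
    unfolding d using assms(7) by simp
qed
definition tri :: "nat \<Rightarrow> nat \<Rightarrow> nat" where "tri d x = min x (d - x)"
definition iI :: "nat \<Rightarrow> nat \<Rightarrow> nat" where "iI n j = tri (2*n) (j div (2*n))"
definition kK :: "nat \<Rightarrow> nat \<Rightarrow> nat" where
  "kK n j = (if j < 4*n*n then min (tri (2*n) (j mod (2*n))) (n - iI n j) else 0)"

lemma suc_divmod:
  assumes "d > (0::nat)"
  shows "(Suc j div d = j div d \<and> Suc j mod d = Suc (j mod d)) \<or>
         (Suc j div d = Suc (j div d) \<and> Suc j mod d = 0 \<and> j mod d = d - 1)"
proof (cases "Suc (j mod d) = d")
  case True
  then show ?thesis using assms by (simp add: mod_Suc div_Suc)
next
  case False
  then show ?thesis using assms by (simp add: mod_Suc div_Suc)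
qed

lemma iI_lip: assumes "n \<ge> 1" shows "iI n (Suc j) \<le> iI n j + 1 \<and> iI n j \<le> iI n (Suc j) + 1"
  using suc_divmod[of "2*n" j] assms unfolding iI_def tri_def by auto

lemma tri_mod_lip: assumes "n \<ge> 1"
  shows "tri (2*n) (Suc j mod (2*n)) \<le> tri (2*n) (j mod (2*n)) + 1 \<and>
         tri (2*n) (j mod (2*n)) \<le> tri (2*n) (Suc j mod (2*n)) + 1"
  using suc_divmod[of "2*n" j] assms unfolding tri_def by auto

lemma kK_lip: assumes "n \<ge> 1" shows "kK n (Suc j) \<le> kK n j + 1 \<and> kK n j \<le> kK n (Suc j) + 1"
proof -
  consider "Suc j < 4*n*n" | "Suc j = 4*n*n" | "Suc j > 4*n*n" by linarith
  then show ?thesis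
  proof cases
    case 1
    then show ?thesis using iI_lip[OF assms, of j] tri_mod_lip[OF assms, of j]
      unfolding kK_def by auto
  next
    case 2
    have "j mod (2*n) = 2*n - 1"
    proof -
      have "Suc j mod (2*n) = 0" using 2 by (metis mod_mult_self1_is_0 mult.assoc mult_2 mult.commute add_mult_distrib numeral_Bit0 ) 
      then show ?thesis using suc_divmod[of "2*n" j] assms by auto
    qed
    then have "tri (2*n) (j mod (2*n)) \<le> 1" unfolding tri_def using assms by auto
    then show ?thesis using 2 unfolding kK_def by auto
  next
    case 3
    then show ?thesis unfolding kK_def by auto
  qed
qed

lemma iI_le: "iI n j \<le> n" unfolding iI_def tri_def by auto
lemma kK_le: "iI n j + kK n j \<le> n" using iI_le[of n j] unfolding kK_def by auto
lemma iI0: "iI n 0 = 0" unfolding iI_def tri_def by auto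
lemma kK0: "kK n 0 = 0" unfolding kK_def tri_def by auto
lemma big: assumes "n \<ge> 1" "j \<ge> 4*n*n" shows "iI n j = 0" "kK n j = 0"
proof -
  have "j div (2*n) \<ge> 2*n" using assms
    by (metis div_le_mono nonzero_mult_div_cancel_left mult.assoc mult_2 mult.commute numeral_Bit0 not_one_le_zero mult_is_0 zero_neq_numeral)
  then show "iI n j = 0" unfolding iI_def tri_def by auto
  show "kK n j = 0" using assms unfolding kK_def by auto
qed

lemma dense:
  assumes "n \<ge> 1" "0 \<le> x" "x < y" "y \<le> (1::real)"
  shows "\<exists>j < 4*n*n. \<bar>x - iI n j / (n+1)\<bar> < 1/(n+1) \<and> \<bar>y - (1 - kK n j/(n+1))\<bar> < 1/(n+1)"
proof -
  define i where "i = nat \<lfloor>x*(n+1)\<rfloor>"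
  define k where "k = nat \<lfloor>(1-y)*(n+1)\<rfloor>"
  have i1: "real i \<le> x*(n+1)" "x*(n+1) < real i + 1" using assms unfolding i_def
    by (auto simp: of_nat_nat)
  have k1: "real k \<le> (1-y)*(n+1)" "(1-y)*(n+1) < real k + 1" using assms unfolding k_def
    by (auto simp: of_nat_nat)
  have "(x-y)*(n+1) < 0" using assms by (simp add: mult_neg_pos)
  hence "real i + real k < n+1" using i1(1) k1(1) by (simp add: algebra_simps)
  hence ik: "i + k \<le> n" by linarith
  define j where "j = i*(2*n) + k"
  have kn: "k < 2*n" using ik assms by auto
  have jd: "j div (2*n) = i" "j mod (2*n) = k" using kn unfolding j_def by auto
  have iI: "iI n j = i" unfolding iI_def tri_def jd using ik by auto
  have jlt: "j < 4*n*n"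
  proof -
    have "j \<le> n*(2*n) + n" unfolding j_def using ik
      by (metis add_le_mono mult_le_mono1 le_add1 le_add2 order_trans)
    also have "\<dots> < 4*n*n" using assms by (simp add: algebra_simps)
    finally show ?thesis .
  qed
  have kK: "kK n j = k" unfolding kK_def tri_def jd iI using ik jlt by auto
  have pos: "(real n+1) > 0" by simp
  have pe: "x - i/(n+1) = (x*(n+1) - i)/(n+1)" using pos by (simp add: field_simps)
  have p1: "0 \<le> (x*(n+1) - i)/(n+1)" using i1 pos by simp
  have p2: "(x*(n+1) - i)/(n+1) < 1/(n+1)" using i1 pos by (simp add: divide_strict_right_mono)
  have p: "\<bar>x - i/(n+1)\<bar> < 1/(n+1)" unfolding pe using p1 p2 by simp
  have qe: "y - (1 - k/(n+1)) = (k - (1-y)*(n+1))/(n+1)" using pos by (simp add: field_simps)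
  have q1: "(k - (1-y)*(n+1))/(n+1) \<le> 0" using k1 pos by (simp add: divide_nonpos_pos)
  have q2': "((1-y)*(n+1) - k)/(n+1) < 1/(n+1)" using k1 pos
    by (simp add: divide_strict_right_mono)
  have "-((k - (1-y)*(n+1))/(n+1)) = ((1-y)*(n+1) - k)/(n+1)" by (simp add: field_simps)
  hence q2: "-((k - (1-y)*(n+1))/(n+1)) < 1/(n+1)" using q2' by simp
  have q: "\<bar>y - (1 - k/(n+1))\<bar> < 1/(n+1)" unfolding qe using q1 q2 by simp
  have "(real n + 1) = 1 + real n" by simp
  then show ?thesis using p q iI kK jlt by (intro exI[of _ j]) (simp add: add.commute)
qed

definition pp :: "nat \<Rightarrow> nat \<Rightarrow> real" where "pp n j = real (iI n j) / (real n+1)"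
definition qq :: "nat \<Rightarrow> nat \<Rightarrow> real" where "qq n j = 1 - real (kK n j) / (real n+1)"

lemma pq_bounds: "0 \<le> pp n j" "pp n j < qq n j" "qq n j \<le> 1"
proof -
  have "real (iI n j) + real (kK n j) \<le> n" using kK_le[of n j] by linarith
  hence "real (iI n j) + real (kK n j) < real n + 1" by linarith
  hence "real (iI n j)/(real n+1) + real (kK n j)/(real n+1) < 1"
    by (simp add: add_divide_distrib[symmetric] divide_less_eq)
  then show "pp n j < qq n j" unfolding pp_def qq_def by linarith
qed (auto simp: pp_def qq_def)

lemma pq0: "pp n 0 = 0" "qq n 0 = 1" by (auto simp: pp_def qq_def iI0 kK0)

lemma nat_lip_real:
  assumes "a \<le> b + 1" "b \<le> a + (1::nat)"
  shows "\<bar>real a / (real n+1) - real b/(real n+1)\<bar> \<le> 1/(real n+1)"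
proof -
  have "\<bar>real a - real b\<bar> \<le> 1" using assms by linarith
  hence "\<bar>real a - real b\<bar>/(real n+1) \<le> 1/(real n+1)" by (simp add: divide_right_mono)
  then show ?thesis by (simp add: diff_divide_distrib[symmetric])
qed

lemma block_close:
  assumes "n \<ge> 1" "j2 = j1 \<or> j2 = Suc j1 \<or> (j1 \<ge> 4*n*n \<and> j2 = 0)"
  shows "\<bar>pp n j2 - pp n j1\<bar> \<le> 1/(n+1) \<and> \<bar>qq n j2 - qq n j1\<bar> \<le> 1/(n+1)"
  using assms(2)
proof (elim disjE)
  assume "j2 = Suc j1"
  then show ?thesis using iI_lip[OF assms(1), of j1] kK_lip[OF assms(1), of j1]
      nat_lip_real[of "iI n j2" "iI n j1" n] nat_lip_real[of "kK n j1" "kK n j2" n]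
    unfolding pp_def qq_def by auto
next
  assume "j1 \<ge> 4*n*n \<and> j2 = 0"
  then show ?thesis using big[OF assms(1), of j1] pq0[of n] unfolding pp_def qq_def by auto
qed auto

theorem lemma8p2:
  fixes V :: "'a set" and E :: "('a \<times> 'a) set"
    and L U :: "'a \<Rightarrow> real" and \<epsilon> :: real
  assumes "finite V" and "is_directed_cycle V E"
    and "\<forall>g\<in>V. L g \<in> {0..1} \<and> U g \<in> {0..1}"
    and "\<forall>g\<in>V. L g < U g"
    and "\<epsilon> > 0"
  shows "\<exists>m0::nat. \<forall>m\<ge>m0. \<exists>(Vt :: nat set) Et \<Psi> Lt Ut.
           lemma8p2_props V E L U \<epsilon> Vt Et \<Psi> Lt Ut \<and> card Vt = m * card V"
proof -
  obtain c :: "nat \<Rightarrow> 'a" and k where k1: "k \<ge> 1" and cb: "bij_betw c {0..<k} V"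
    and Edef: "E = {(c i, c ((i + 1) mod k)) | i. i < k}"
    using assms(2) unfolding is_directed_cycle_def by blast
  have cardV: "card V = k" using bij_betw_same_card[OF cb] by simp
  have Vc: "V = c ` {0..<k}" using cb by (simp add: bij_betw_def)
  obtain n0 :: nat where n0: "inverse (real (Suc n0)) < \<epsilon>" using reals_Archimedean[OF assms(5)] by blast
  define n where "n = Suc n0"
  have n1: "n \<ge> 1" by (simp add: n_def)
  have hE: "1/(real n+1) < \<epsilon>"
  proof -
    have "1/(real n+1) \<le> inverse (real (Suc n0))" by (simp add: n_def inverse_eq_divide frac_le)
    then show ?thesis using n0 by linarith
  qed
  define N where "N = 4*n*n"
  show ?thesis
  proof (intro exI[of _ "Suc N"] allI impI)
    fix m assume mN: "m \<ge> Suc N"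
    define M where "M = m*k"
    define Vt where "Vt = {0..<M}"
    define Et where "Et = {(t, Suc t mod M) | t. t < M}"
    define \<Psi> where "\<Psi> t = c (t mod k)" for t
    define Lt where "Lt t = L (\<Psi> t) + pp n (t div k) * (U (\<Psi> t) - L (\<Psi> t))" for t
    define Ut where "Ut t = L (\<Psi> t) + qq n (t div k) * (U (\<Psi> t) - L (\<Psi> t))" for t
    have Mpos: "M \<ge> 1" using mN k1 by (simp add: M_def)
    have PsiV: "\<Psi> t \<in> V" for t using k1 Vc by (auto simp: \<Psi>_def)
    have cyc: "is_directed_cycle Vt Et" unfolding is_directed_cycle_def Vt_def Et_def
      by (rule exI[of _ id], rule exI[of _ M]) (use Mpos in auto)
    have hom: "edge_hom Vt Et V E \<Psi>"
      unfolding edge_hom_def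
    proof (intro conjI ballI)
      show "\<Psi> v \<in> V" for v by (rule PsiV)
    next
      fix e assume "e \<in> Et"
      then obtain t where e: "e = (t, Suc t mod M)" "t < M" unfolding Et_def by auto
      have "Suc t mod M mod k = Suc (t mod k) mod k"
        unfolding M_def by (simp add: mod_mod_cancel mod_Suc_eq)
      then show "case e of (u, v) \<Rightarrow> (\<Psi> u, \<Psi> v) \<in> E" unfolding Edef e \<Psi>_def using k1
        by auto
    qed
    have img: "\<Psi> ` Vt = V"
    proof
      show "\<Psi> ` Vt \<subseteq> V" using PsiV by auto
      show "V \<subseteq> \<Psi> ` Vt"
      proof
        fix g assume "g \<in> V"
        then obtain i where i: "i < k" "g = c i" using Vc by auto
        have "i < M" using i mult_le_mono1[OF mN, of k] by (simp add: M_def)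
        then show "g \<in> \<Psi> ` Vt" using i unfolding Vt_def \<Psi>_def by force
      qed
    qed
    have LU: "L (\<Psi> t) \<le> Lt t \<and> Lt t < Ut t \<and> Ut t \<le> U (\<Psi> t) \<and> Lt t \<in> {0..1} \<and> Ut t \<in> {0..1}" for t
    proof -
      have g: "0 \<le> L (\<Psi> t)" "L (\<Psi> t) < U (\<Psi> t)" "U (\<Psi> t) \<le> 1" using assms(3,4) PsiV[of t] by auto
      define W where "W = U (\<Psi> t) - L (\<Psi> t)"
      have W: "W > 0" using g by (simp add: W_def)
      have b: "0 \<le> pp n (t div k)" "pp n (t div k) < qq n (t div k)" "qq n (t div k) \<le> 1" using pq_bounds by auto
      have "0 \<le> pp n (t div k) * W" using b W by simp
      moreover have "pp n (t div k) * W < qq n (t div k) * W" using b W by simp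
      moreover have "qq n (t div k) * W \<le> W" using b W by simp
      moreover have "Lt t = L (\<Psi> t) + pp n (t div k) * W" "Ut t = L (\<Psi> t) + qq n (t div k) * W"
        "U (\<Psi> t) = L (\<Psi> t) + W" by (simp_all add: Lt_def Ut_def W_def)
      ultimately show ?thesis using g by (simp only: atLeastAtMost_iff) linarith
    qed
    have pb: "\<forall>g\<in>V. \<exists>t\<in>Vt. \<Psi> t = g \<and> Lt t = L g \<and> Ut t = U g"
    proof
      fix g assume "g \<in> V"
      then obtain i where i: "i < k" "g = c i" using Vc by auto
      have "i < M" using i mult_le_mono1[OF mN, of k] by (simp add: M_def)
      moreover have "i div k = 0" "i mod k = i" using i by auto
      ultimately show "\<exists>t\<in>Vt. \<Psi> t = g \<and> Lt t = L g \<and> Ut t = U g" using i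
        by (intro bexI[of _ i]) (auto simp: Vt_def \<Psi>_def Lt_def Ut_def pq0)
    qed
    have pc: "\<forall>g\<in>V. \<forall>a b. L g \<le> a \<and> a < b \<and> b \<le> U g \<longrightarrow>
        (\<exists>t\<in>Vt. \<Psi> t = g \<and> \<bar>a - Lt t\<bar> < \<epsilon> \<and> \<bar>b - Ut t\<bar> < \<epsilon>)"
    proof (intro ballI allI impI)
      fix g a b assume g: "g \<in> V" and ab: "L g \<le> a \<and> a < b \<and> b \<le> U g"
      then obtain i where i: "i < k" "g = c i" using Vc by auto
      define W where "W = U g - L g"
      have W: "W > 0" "W \<le> 1" using assms(3,4) g by (auto simp: W_def)
      define x where "x = (a - L g)/W"
      define y where "y = (b - L g)/W"
      have xy1: "0 \<le> x" using ab W unfolding x_def by simp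
      have xy2: "x < y" using ab W unfolding x_def y_def by (simp add: divide_strict_right_mono)
      have "(b - L g)/W \<le> W/W" using ab W unfolding W_def by (intro divide_right_mono) auto
      hence xy3: "y \<le> 1" using W unfolding y_def by simp
      note xy = xy1 xy2 xy3
      from dense[OF n1 xy] obtain j where j0: "j < 4*n*n" "\<bar>x - real (iI n j) / (real n+1)\<bar> < 1/(real n+1)" "\<bar>y - (1 - real (kK n j)/(real n+1))\<bar> < 1/(real n+1)"
        by (elim exE conjE) (rule that)
      have j: "j < N" "\<bar>x - pp n j\<bar> < 1/(real n+1)" "\<bar>y - qq n j\<bar> < 1/(real n+1)"
        using j0 unfolding N_def pp_def qq_def by auto
      define t where "t = j*k + i"
      have tk: "t mod k = i" "t div k = j" using i by (auto simp: t_def)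
      have "t < (j+1)*k" using i by (simp add: t_def)
      also have "\<dots> \<le> m*k" using j mN by (intro mult_le_mono1) simp
      finally have tV: "t \<in> Vt" by (simp add: Vt_def M_def)
      have ax: "a = L g + x*W" "b = L g + y*W" using W by (auto simp: x_def y_def)
      have Ltt: "Lt t = L g + pp n j * W" "Ut t = L g + qq n j * W"
        unfolding Lt_def Ut_def \<Psi>_def tk i(2)[symmetric] W_def by auto
      have "\<bar>a - Lt t\<bar> = \<bar>x - pp n j\<bar> * W" unfolding ax Ltt using W
        by (simp add: abs_mult left_diff_distrib[symmetric])
      also have "\<dots> \<le> \<bar>x - pp n j\<bar>" using W by (simp add: mult_left_le)
      finally have 1: "\<bar>a - Lt t\<bar> < \<epsilon>" using j(2) hE by linarith
      have "\<bar>b - Ut t\<bar> = \<bar>y - qq n j\<bar> * W" unfolding ax Ltt using W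
        by (simp add: abs_mult left_diff_distrib[symmetric])
      also have "\<dots> \<le> \<bar>y - qq n j\<bar>" using W by (simp add: mult_left_le)
      finally have 2: "\<bar>b - Ut t\<bar> < \<epsilon>" using j(3) hE by linarith
      show "\<exists>t\<in>Vt. \<Psi> t = g \<and> \<bar>a - Lt t\<bar> < \<epsilon> \<and> \<bar>b - Ut t\<bar> < \<epsilon>"
        using tV 1 2 tk i by (auto simp: \<Psi>_def)
    qed
    have pd: "\<forall>(t1,t2)\<in>Et.
        let g1 = \<Psi> t1; g2 = \<Psi> t2 in
        eps_close_on \<epsilon> ({L g1..U g1} \<inter> {Lt t1..Ut t1})
          (aff_map (L g1) (U g1) (L g2) (U g2))
          (aff_map (Lt t1) (Ut t1) (Lt t2) (Ut t2)) \<and>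
        eps_close_on \<epsilon> ({L g2..U g2} \<inter> {Lt t2..Ut t2})
          (aff_map (L g2) (U g2) (L g1) (U g1))
          (aff_map (Lt t2) (Ut t2) (Lt t1) (Ut t1))"
    proof (intro ballI, clarify)
      fix t1 t2 assume "(t1, t2) \<in> Et"
      then have t: "t2 = Suc t1 mod M" "t1 < M" unfolding Et_def by auto
      define j1 where "j1 = t1 div k"
      define j2 where "j2 = t2 div k"
      have jj: "j2 = j1 \<or> j2 = Suc j1 \<or> (j1 \<ge> 4*n*n \<and> j2 = 0)"
      proof (cases "Suc t1 < M")
        case True
        then have "t2 = Suc t1" using t by simp
        then show ?thesis using suc_divmod[of k t1] k1 unfolding j1_def j2_def by auto
      next
        case False
        then have s: "Suc t1 = M" using t by simp
        then have "t2 = 0" using t by simp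
        moreover have "j1 \<ge> N"
        proof -
          have "N*k + k \<le> m*k" using mult_le_mono1[OF mN, of k] by simp
          then have "N*k \<le> t1" using s k1 unfolding M_def by linarith
          then have "(N*k) div k \<le> t1 div k" by (rule div_le_mono)
          then show ?thesis using k1 unfolding j1_def by simp
        qed
        ultimately show ?thesis unfolding j2_def N_def by auto
      qed
      have bc: "\<bar>pp n j2 - pp n j1\<bar> \<le> 1/(real n+1)" "\<bar>qq n j2 - qq n j1\<bar> \<le> 1/(real n+1)"
        using block_close[OF n1 jj] by auto
      have bc': "\<bar>pp n j1 - pp n j2\<bar> \<le> 1/(real n+1)" "\<bar>qq n j1 - qq n j2\<bar> \<le> 1/(real n+1)"
        using bc by (auto simp: abs_minus_commute)
      define g1 where "g1 = \<Psi> t1"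
      define g2 where "g2 = \<Psi> t2"
      have g: "L g1 < U g1" "L g2 < U g2" "U g1 - L g1 \<le> 1" "U g2 - L g2 \<le> 1"
      proof -
        have A: "0 \<le> L g \<and> U g \<le> 1 \<and> L g < U g" if "g \<in> V" for g using assms(3,4) that by auto
        show "L g1 < U g1" "L g2 < U g2" "U g1 - L g1 \<le> 1" "U g2 - L g2 \<le> 1"
          using A[OF PsiV[of t1]] A[OF PsiV[of t2]] unfolding g1_def g2_def by linarith+
      qed
      have p: "pp n j1 < qq n j1" "pp n j2 < qq n j2" using pq_bounds by auto
      have L1: "Lt t1 = L g1 + pp n j1 * (U g1 - L g1)" "Ut t1 = L g1 + qq n j1 * (U g1 - L g1)"
        "Lt t2 = L g2 + pp n j2 * (U g2 - L g2)" "Ut t2 = L g2 + qq n j2 * (U g2 - L g2)"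
        unfolding Lt_def Ut_def g1_def g2_def j1_def j2_def by auto
      show "let g1 = \<Psi> t1; g2 = \<Psi> t2 in
        eps_close_on \<epsilon> ({L g1..U g1} \<inter> {Lt t1..Ut t1})
          (aff_map (L g1) (U g1) (L g2) (U g2))
          (aff_map (Lt t1) (Ut t1) (Lt t2) (Ut t2)) \<and>
        eps_close_on \<epsilon> ({L g2..U g2} \<inter> {Lt t2..Ut t2})
          (aff_map (L g2) (U g2) (L g1) (U g1))
          (aff_map (Lt t2) (Ut t2) (Lt t1) (Ut t1))"
        unfolding Let_def g1_def[symmetric] g2_def[symmetric] L1
        using dlem[OF g(1) g(2) g(4) p(1) bc hE] dlem[OF g(2) g(1) g(3) p(2) bc' hE] by simp
    qed
    have cardVt: "card Vt = m * card V" unfolding Vt_def M_def cardV by simp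
    show "\<exists>(Vt :: nat set) Et \<Psi> Lt Ut.
           lemma8p2_props V E L U \<epsilon> Vt Et \<Psi> Lt Ut \<and> card Vt = m * card V"
      using cyc hom img LU pb pc pd cardVt unfolding lemma8p2_props_def by blast
  qed
qed
end
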